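(* Assume $0<\theta_1\le\dots\le\theta_N$, $m_i>0$, $\sigma>0$, $p>0$, and let $\mathbf y=\mathbf y^*\in\mathbb R^N_+$ be the (unique) positive solution of $$\sum_{k=1}^N m_k(y_k-y_i)+\sigma(\theta_i-y_i^p)y_i=0,\qquad i=1,\dots,N.$$ Let $\bar y=\frac1M\sum_i m_iy_i$. Then there exists an index $1\le i_0\le N$ such that $$\theta_i\le y_i^p\ \text{ for } i\le i_0,\qquad y_{i_0}\le\bar y\le y_{i_0+1},\qquad y_i^p\le\theta_i\ \text{ for } i\ge i_0+1,$$ where conditions involving the index $i_0+1$ are vacuous if $i_0=N$.
   Context: $\mathbb R^N_+$ denotes the set of vectors with all coordinates strictly positive; $M=\sum_i m_i$. *)

theory Defs
  imports Complex_Main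
begin

end

theory Submission
  imports Defs
begin

theorem lemma5p5:
  fixes N :: nat and \<theta> m y :: "nat \<Rightarrow> real" and \<sigma> p :: real
  assumes "N \<ge> 1"
    and "0 < \<theta> 1"
    and "\<And>i j. 1 \<le> i \<Longrightarrow> i \<le> j \<Longrightarrow> j \<le> N \<Longrightarrow> \<theta> i \<le> \<theta> j"
    and "\<And>i. i \<in> {1..N} \<Longrightarrow> m i > 0"
    and "\<sigma> > 0" and "p > 0"
    and "\<And>i. i \<in> {1..N} \<Longrightarrow> y i > 0"
    and "\<And>i. i \<in> {1..N} \<Longrightarrow>
           (\<Sum>k=1..N. m k * (y k - y i)) + \<sigma> * (\<theta> i - y i powr p) * y i = 0"
  shows "\<exists>i0\<in>{1..N}.
           (\<forall>i\<in>{1..i0}. \<theta> i \<le> y i powr p)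
         \<and> y i0 \<le> (\<Sum>i=1..N. m i * y i) / (\<Sum>i=1..N. m i)
         \<and> (i0 < N \<longrightarrow> (\<Sum>i=1..N. m i * y i) / (\<Sum>i=1..N. m i) \<le> y (i0 + 1))
         \<and> (\<forall>i\<in>{i0+1..N}. y i powr p \<le> \<theta> i)"
proof -
  define S where "S = (\<Sum>i=1..N. m i * y i)"
  define M where "M = (\<Sum>i=1..N. m i)"
  define yb where "yb = S / M"
  have Mpos: "M > 0" unfolding M_def
    using assms(1,4) by (intro sum_pos) auto
  have eq: "S - M * y i = \<sigma> * (y i powr p - \<theta> i) * y i" if "i \<in> {1..N}" for i
  proof -
    have "(\<Sum>k=1..N. m k * (y k - y i)) = S - M * y i"
      unfolding S_def M_def by (simp add: right_diff_distrib sum_subtractf sum_distrib_right)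
    thus ?thesis using assms(8)[OF that] by (simp add: algebra_simps)
  qed
  have Syb: "S = M * yb" using Mpos unfolding yb_def by simp
  have gt: "y i > yb \<longleftrightarrow> y i powr p < \<theta> i" if "i \<in> {1..N}" for i
  proof -
    have yi: "y i > 0" using assms(7) that by auto
    have d: "S - M * y i = M * (yb - y i)" by (simp add: Syb right_diff_distrib)
    have "y i > yb \<longleftrightarrow> S - M * y i < 0" unfolding d using Mpos
      by (simp add: mult_less_0_iff)
    also have "\<dots> \<longleftrightarrow> \<sigma> * (y i powr p - \<theta> i) * y i < 0" using eq[OF that] by simp
    also have "\<dots> \<longleftrightarrow> y i powr p < \<theta> i" using yi assms(5)
      by (simp add: mult_less_0_iff)
    finally show ?thesis .
  qed
  have key: "y i \<le> yb" if "1 \<le> i" "i \<le> j" "j \<le> N" "y j \<le> yb" for i j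
  proof (rule ccontr)
    assume "\<not> y i \<le> yb"
    hence a: "y i powr p < \<theta> i" using gt[of i] that by auto
    have "\<not> y j powr p < \<theta> j" using gt[of j] that by auto
    moreover have "\<theta> i \<le> \<theta> j" using assms(3) that by auto
    ultimately have "y i powr p < y j powr p" using a by auto
    have "y j > 0" "y i > 0" using assms(7) that by auto
    hence "y i < y j" using powr_mono2[of p "y j" "y i"] assms(6) \<open>y i powr p < y j powr p\<close>
      by force
    thus False using \<open>\<not> y i \<le> yb\<close> that by auto
  qed
  define A where "A = {i\<in>{1..N}. y i \<le> yb}"
  have "A \<noteq> {}"
  proof
    assume "A = {}"
    hence "\<forall>i\<in>{1..N}. yb < y i" unfolding A_def by auto
    hence "(\<Sum>i=1..N. m i * yb) < (\<Sum>i=1..N. m i * y i)"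
      using assms(1,4) by (intro sum_strict_mono) auto
    moreover have "(\<Sum>i=1..N. m i * yb) = M * yb" unfolding M_def by (simp add: sum_distrib_right)
    ultimately show False using Syb unfolding S_def by simp
  qed
  have finA: "finite A" unfolding A_def by auto
  define i0 where "i0 = Max A"
  have i0A: "i0 \<in> A" using finA \<open>A \<noteq> {}\<close> unfolding i0_def by simp
  have i0max: "i \<le> i0" if "i \<in> A" for i using finA that unfolding i0_def by simp
  show ?thesis
    unfolding S_def[symmetric] M_def[symmetric] yb_def[symmetric]
  proof (intro bexI[of _ i0] conjI ballI impI)
    show "i0 \<in> {1..N}" using i0A A_def by auto
    show "y i0 \<le> yb" using i0A A_def by auto
    fix i assume i: "i \<in> {1..i0}"
    hence "y i \<le> yb" using key[of i i0] i0A A_def by auto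
    thus "\<theta> i \<le> y i powr p" using gt[of i] i i0A A_def by force
  next
    fix i assume i: "i \<in> {i0+1..N}"
    hence "i \<notin> A" using i0max by force
    hence "y i > yb" using i A_def by auto
    thus "y i powr p \<le> \<theta> i" using gt[of i] i by force
  next
    assume "i0 < N"
    hence "i0+1 \<notin> A" using i0max by force
    thus "yb \<le> y (i0+1)" using \<open>i0 < N\<close> A_def by auto
  qed
qed

end
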